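(* Let $E$ and $F$ be Banach lattices such that $E$ or $F$ is order continuous. Then every $L$-weakly compact lattice homomorphism $T\colon E\to F$ is $uaw$-Dunford-Pettis.
   Context: A net $(x_\alpha)$ in a Banach lattice $E$ is $uaw$-convergent to $x$ if $|x_\alpha-x|\wedge u\to 0$ weakly for every $u\in E_+$. A bounded operator $T\colon E\to F$ is $uaw$-Dunford-Pettis if every norm bounded $uaw$-null sequence $(x_n)$ in $E$ satisfies $\|Tx_n\|\to 0$. $T$ is $L$-weakly compact if every disjoint sequence contained in the solid hull of $T(B_E)$ is norm null. *)

theory Defs
  imports "HOL-Analysis.Analysis"
begin

class banach_lattice = banach + ordered_real_vector + lattice +
  assumes lattice_norm: "sup x (- x) \<le> sup y (- y) \<Longrightarrow> norm x \<le> norm y"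

definition labs :: "'a::banach_lattice \<Rightarrow> 'a" where
  "labs x = sup x (- x)"

text \<open>Order continuity: every net decreasing to 0 is norm null. A decreasing net
  is represented by its (downward directed) set of values D with infimum 0.\<close>
definition order_continuous :: "'a::banach_lattice itself \<Rightarrow> bool" where
  "order_continuous _ \<longleftrightarrow>
    (\<forall>D :: 'a set. D \<noteq> {}
       \<and> (\<forall>x\<in>D. \<forall>y\<in>D. \<exists>z\<in>D. z \<le> x \<and> z \<le> y)
       \<and> (\<forall>x\<in>D. 0 \<le> x)
       \<and> (\<forall>w. (\<forall>x\<in>D. w \<le> x) \<longrightarrow> w \<le> 0)
       \<longrightarrow> (\<forall>e>0. \<exists>x\<in>D. norm x < e))"

definition weakly_null :: "(nat \<Rightarrow> 'a::real_normed_vector) \<Rightarrow> bool" where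
  "weakly_null x \<longleftrightarrow>
    (\<forall>f :: 'a \<Rightarrow> real. bounded_linear f \<longrightarrow> (\<lambda>n. f (x n)) \<longlonglongrightarrow> 0)"

definition uaw_null :: "(nat \<Rightarrow> 'a::banach_lattice) \<Rightarrow> bool" where
  "uaw_null x \<longleftrightarrow> (\<forall>u. 0 \<le> u \<longrightarrow> weakly_null (\<lambda>n. inf (labs (x n)) u))"

definition uaw_DP :: "('a::banach_lattice \<Rightarrow> 'b::banach_lattice) \<Rightarrow> bool" where
  "uaw_DP T \<longleftrightarrow> bounded_linear T \<and>
    (\<forall>x :: nat \<Rightarrow> 'a. bounded (range x) \<and> uaw_null x
        \<longrightarrow> (\<lambda>n. norm (T (x n))) \<longlonglongrightarrow> 0)"

definition solid_hull :: "'a::banach_lattice set \<Rightarrow> 'a set" where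
  "solid_hull A = {y. \<exists>a\<in>A. labs y \<le> labs a}"

definition disjoint_seq :: "(nat \<Rightarrow> 'a::banach_lattice) \<Rightarrow> bool" where
  "disjoint_seq x \<longleftrightarrow> (\<forall>m n. m \<noteq> n \<longrightarrow> inf (labs (x m)) (labs (x n)) = 0)"

definition L_weakly_compact :: "('a::banach_lattice \<Rightarrow> 'b::banach_lattice) \<Rightarrow> bool" where
  "L_weakly_compact T \<longleftrightarrow> bounded_linear T \<and>
    (\<forall>y :: nat \<Rightarrow> 'b. disjoint_seq y \<and> range y \<subseteq> solid_hull (T ` cball 0 1)
        \<longrightarrow> (\<lambda>n. norm (y n)) \<longlonglongrightarrow> 0)"

definition lattice_hom :: "('a::banach_lattice \<Rightarrow> 'b::banach_lattice) \<Rightarrow> bool" where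
  "lattice_hom T \<longleftrightarrow> linear T \<and> (\<forall>x y. T (sup x y) = sup (T x) (T y))"

end

theory Submission
  imports Defs "HOL-Library.Lattice_Algebras"
begin

context banach_lattice begin
subclass lattice_ab_group_add ..
end

lemma labs_nonneg: "0 \<le> labs (x::'a::banach_lattice)"
proof -
  have "0 \<le> sup x (-x) + sup x (-x)"
  proof -
    have "x + (-x) \<le> sup x (-x) + sup x (-x)"
      by (intro add_mono) auto
    then show ?thesis by simp
  qed
  then show ?thesis unfolding labs_def by simp
qed

lemma labs_of_nonneg: assumes "0 \<le> (x::'a::banach_lattice)" shows "labs x = x"
proof -
  have "-x \<le> 0" using assms by simp
  then have "-x \<le> x" using assms by (rule order_trans)
  then show ?thesis unfolding labs_def by (rule sup_absorb1)
qed

lemma labs_labs: "labs (labs (x::'a::banach_lattice)) = labs x"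
  by (simp add: labs_nonneg labs_of_nonneg)

lemma norm_labs: "norm (labs (x::'a::banach_lattice)) = norm x"
proof (rule antisym)
  show "norm (labs x) \<le> norm x"
    by (rule lattice_norm) (simp only: labs_def[symmetric] labs_labs order_refl)
  show "norm x \<le> norm (labs x)"
    by (rule lattice_norm) (simp only: labs_def[symmetric] labs_labs order_refl)
qed

lemma norm_mono_labs: "labs (x::'a::banach_lattice) \<le> labs y \<Longrightarrow> norm x \<le> norm y"
  by (simp add: labs_def lattice_norm)

lemma norm_mono_pos: "0 \<le> (x::'a::banach_lattice) \<Longrightarrow> x \<le> y \<Longrightarrow> norm x \<le> norm y"
  by (rule norm_mono_labs) (simp add: labs_of_nonneg)

lemma labs_le: "(x::'a::banach_lattice) \<le> m \<Longrightarrow> -x \<le> m \<Longrightarrow> labs x \<le> m"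
  unfolding labs_def by simp

lemma norm_le_of_bounds: "(x::'a::banach_lattice) \<le> m \<Longrightarrow> -x \<le> m \<Longrightarrow> norm x \<le> norm m"
proof -
  assume a: "x \<le> m" "-x \<le> m"
  have "0 \<le> m" using a add_mono[OF a] by simp
  then show ?thesis using a by (intro norm_mono_labs) (simp add: labs_le labs_of_nonneg)
qed

lemma pprt_le_labs: "pprt (x::'a::banach_lattice) \<le> labs x"
  unfolding pprt_def using labs_nonneg[of x] by (simp add: labs_def)

lemma norm_pprt_le: "norm (pprt (x::'a::banach_lattice)) \<le> norm x"
  by (metis norm_labs norm_mono_pos pprt_le_labs zero_le_pprt)

lemma pprt_subadd: "pprt ((x::'a::banach_lattice) + y) \<le> pprt x + pprt y"
  unfolding pprt_def by (simp add: add_mono)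

lemma pprt_diff_le: "pprt (x::'a::banach_lattice) - pprt y \<le> pprt (x - y)"
  using pprt_subadd[of "x - y" y] by (simp add: diff_le_eq)

lemma labs_pprt_diff: "labs (pprt (x::'a::banach_lattice) - pprt y) \<le> labs (x - y)"
proof (rule labs_le)
  show "pprt x - pprt y \<le> labs (x - y)" using pprt_diff_le[of x y] pprt_le_labs[of "x-y"] by auto
  have "pprt y - pprt x \<le> labs (y - x)" using pprt_diff_le[of y x] pprt_le_labs[of "y-x"] by auto
  moreover have "labs (y - x) = labs (x - y)" unfolding labs_def by (simp add: sup_commute)
  ultimately show "- (pprt x - pprt y) \<le> labs (x - y)" by simp
qed

lemma norm_pprt_diff: "norm (pprt (x::'a::banach_lattice) - pprt y) \<le> norm (x - y)"
  using norm_mono_labs labs_pprt_diff by blast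

lemma sup_via_pprt: "sup (x::'a::banach_lattice) y = pprt (x - y) + y"
  unfolding pprt_def by (simp add: add_sup_distrib_right)

lemma inf_via_pprt: "inf (x::'a::banach_lattice) y = x - pprt (x - y)"
  using add_eq_inf_sup[of x y] sup_via_pprt[of x y] by (simp add: algebra_simps)

lemma decomp_inf_pprt: "(x::'a::banach_lattice) = inf x a + pprt (x - a)"
  by (simp add: inf_via_pprt)

lemma pprt_le_pprt_diff_plus:
  assumes "0 \<le> (b::'a::banach_lattice)" shows "pprt a \<le> pprt (a - b) + b"
proof -
  have "pprt (a - b) + b = sup a b" by (simp add: sup_via_pprt)
  moreover have "pprt a \<le> sup a b" unfolding pprt_def by (rule sup_mono[OF order_refl assms])
  ultimately show ?thesis by simp
qed

lemma scaleR_sup: "0 \<le> t \<Longrightarrow> t *\<^sub>R sup (x::'a::banach_lattice) y = sup (t *\<^sub>R x) (t *\<^sub>R y)"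
proof (cases "t = 0")
  case False
  assume t: "0 \<le> t"
  then have tp: "0 < t" using False by simp
  show ?thesis
  proof (rule antisym)
    have "x \<le> inverse t *\<^sub>R sup (t *\<^sub>R x) (t *\<^sub>R y)"
      using scaleR_left_mono[OF sup.cobounded1[of "t *\<^sub>R x" "t *\<^sub>R y"], of "inverse t"] tp by simp
    moreover have "y \<le> inverse t *\<^sub>R sup (t *\<^sub>R x) (t *\<^sub>R y)"
      using scaleR_left_mono[OF sup.cobounded2[of "t *\<^sub>R y" "t *\<^sub>R x"], of "inverse t"] tp by simp
    ultimately have "sup x y \<le> inverse t *\<^sub>R sup (t *\<^sub>R x) (t *\<^sub>R y)" by simp
    from scaleR_left_mono[OF this, of t] tp
    show "t *\<^sub>R sup x y \<le> sup (t *\<^sub>R x) (t *\<^sub>R y)" by simp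
    show "sup (t *\<^sub>R x) (t *\<^sub>R y) \<le> t *\<^sub>R sup x y"
      by (simp add: scaleR_left_mono t)
  qed
qed simp

lemma scaleR_pprt: "0 \<le> t \<Longrightarrow> t *\<^sub>R pprt (x::'a::banach_lattice) = pprt (t *\<^sub>R x)"
  unfolding pprt_def by (simp add: scaleR_sup)

lemma scaleR_inf: "0 \<le> t \<Longrightarrow> t *\<^sub>R inf (x::'a::banach_lattice) y = inf (t *\<^sub>R x) (t *\<^sub>R y)"
proof -
  assume t: "0 \<le> t"
  have "t *\<^sub>R inf x y = - (t *\<^sub>R sup (- x) (- y))" by (simp only: inf_eq_neg_sup[of x y] scaleR_minus_right)
  also have "\<dots> = - sup (- (t *\<^sub>R x)) (- (t *\<^sub>R y))" by (simp only: scaleR_sup[OF t] scaleR_minus_right)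
  also have "\<dots> = inf (t *\<^sub>R x) (t *\<^sub>R y)" by (simp only: inf_eq_neg_sup[symmetric])
  finally show ?thesis .
qed

lemma tendsto_pprt:
  fixes X :: "nat \<Rightarrow> 'a::banach_lattice"
  assumes "X \<longlonglongrightarrow> L" shows "(\<lambda>n. pprt (X n)) \<longlonglongrightarrow> pprt L"
proof -
  have "(\<lambda>n. norm (X n - L)) \<longlonglongrightarrow> 0"
    using assms by (simp add: LIM_zero tendsto_norm_zero)
  then have "(\<lambda>n. pprt (X n) - pprt L) \<longlonglongrightarrow> 0"
    by (rule Lim_null_comparison[rotated]) (simp add: norm_pprt_diff)
  then show ?thesis by (rule LIM_zero_cancel)
qed

lemma nonneg_limit:
  fixes X :: "nat \<Rightarrow> 'a::banach_lattice"
  assumes "X \<longlonglongrightarrow> L" "eventually (\<lambda>n. 0 \<le> X n) sequentially"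
  shows "0 \<le> L"
proof -
  have "(\<lambda>n. pprt (- X n)) \<longlonglongrightarrow> pprt (- L)"
    by (intro tendsto_pprt tendsto_minus assms)
  moreover have "eventually (\<lambda>n. pprt (- X n) = 0) sequentially"
    using assms(2) by eventually_elim simp
  ultimately have "(\<lambda>n. 0) \<longlonglongrightarrow> pprt (- L)"
    by (rule Lim_transform_eventually)
  then have "pprt (- L) = 0" using LIMSEQ_unique tendsto_const by blast
  then show ?thesis by (simp add: le_zero_iff_zero_pprt[symmetric])
qed

lemma le_limit:
  fixes X :: "nat \<Rightarrow> 'a::banach_lattice"
  assumes "X \<longlonglongrightarrow> L" "eventually (\<lambda>n. c \<le> X n) sequentially"
  shows "c \<le> L"
proof -
  have "0 \<le> L - c"
    by (rule nonneg_limit[of "\<lambda>n. X n - c"]) (auto intro: tendsto_diff assms elim: eventually_mono[OF assms(2)])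
  then show ?thesis by simp
qed

lemma limit_le:
  fixes X :: "nat \<Rightarrow> 'a::banach_lattice"
  assumes "X \<longlonglongrightarrow> L" "eventually (\<lambda>n. X n \<le> c) sequentially"
  shows "L \<le> c"
proof -
  have "0 \<le> c - L"
    by (rule nonneg_limit[of "\<lambda>n. c - X n"]) (auto intro: tendsto_diff assms elim: eventually_mono[OF assms(2)])
  then show ?thesis by simp
qed

lemma archimedean_lattice:
  fixes z c :: "'a::banach_lattice"
  assumes "\<And>n::nat. real n *\<^sub>R z \<le> c"
  shows "z \<le> 0"
proof -
  have b: "real n * norm (pprt z) \<le> norm (pprt c)" for n
  proof -
    have "real n *\<^sub>R pprt z = pprt (real n *\<^sub>R z)" by (simp add: scaleR_pprt)
    also have "\<dots> \<le> pprt c" using assms pprt_mono by blast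
    finally have "norm (real n *\<^sub>R pprt z) \<le> norm (pprt c)"
      by (intro norm_mono_pos) (simp_all add: scaleR_nonneg_nonneg)
    then show ?thesis by simp
  qed
  have "norm (pprt z) = 0"
  proof (rule ccontr)
    assume "norm (pprt z) \<noteq> 0"
    then have p: "norm (pprt z) > 0" by simp
    obtain n :: nat where "norm (pprt c) / norm (pprt z) < real n" using reals_Archimedean2 by blast
    then have "norm (pprt c) < real n * norm (pprt z)" using p by (simp add: field_simps)
    with b[of n] show False by simp
  qed
  then show ?thesis by (simp add: le_zero_iff_zero_pprt)
qed

lemma pprt_inf_neg: "inf (pprt (u::'a::banach_lattice)) (pprt (- u)) = 0"
proof -
  have "pprt u + (- u) = sup (u + (- u)) (0 + (- u))"
    unfolding pprt_def by (rule add_sup_distrib_right)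
  then have e: "pprt (- u) = pprt u + (- u)" by (simp add: pprt_def sup_commute)
  have "inf (pprt u) (pprt u + (- u)) = inf (pprt u + 0) (pprt u + (- u))" by simp
  also have "\<dots> = pprt u + inf 0 (- u)" by (rule add_inf_distrib_left[symmetric])
  also have "inf 0 (- u) = - sup (- 0) (- (- u))" by (rule inf_eq_neg_sup)
  also have "\<dots> = - pprt u" by (simp only: minus_zero minus_minus pprt_def sup_commute)
  finally show ?thesis using e by simp
qed

lemma inf_scale_zero:
  fixes A B :: "'a::banach_lattice"
  assumes "0 \<le> A" "0 \<le> B" "inf A B = 0" "0 < t"
  shows "inf A (t *\<^sub>R B) = 0"
proof (cases "t \<le> 1")
  case True
  have "t *\<^sub>R B \<le> B" using scaleR_right_mono[OF True assms(2)] by simp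
  then have "inf A (t *\<^sub>R B) \<le> inf A B" by (simp add: inf.coboundedI2 le_infI1)
  moreover have "0 \<le> inf A (t *\<^sub>R B)" using assms by (simp add: scaleR_nonneg_nonneg)
  ultimately show ?thesis using assms(3) by simp
next
  case False
  have it: "0 < inverse t" "inverse t \<le> 1" using False assms by (auto simp: inverse_le_1_iff)
  have "inverse t *\<^sub>R A \<le> A" using scaleR_right_mono[OF it(2) assms(1)] by simp
  then have le: "inf (inverse t *\<^sub>R A) B \<le> inf A B" by (simp add: inf.coboundedI1 le_infI2)
  have "inf A (t *\<^sub>R B) = t *\<^sub>R inf (inverse t *\<^sub>R A) B"
    using assms(4) by (simp add: scaleR_inf)
  also have "\<dots> \<le> t *\<^sub>R inf A B" using le assms(4) by (simp add: scaleR_left_mono)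
  finally have "inf A (t *\<^sub>R B) \<le> 0" using assms(3) by simp
  moreover have "0 \<le> inf A (t *\<^sub>R B)" using assms by (simp add: scaleR_nonneg_nonneg)
  ultimately show ?thesis by simp
qed

lemma disj_key:
  fixes p q :: "'a::banach_lattice"
  assumes "0 < c"
  shows "inf (pprt (p - c *\<^sub>R q)) (pprt (q - inverse c *\<^sub>R p)) = 0"
proof -
  have v: "inverse c *\<^sub>R (- (p - c *\<^sub>R q)) = q - inverse c *\<^sub>R p"
    using assms by (simp add: scaleR_diff_right)
  have "inverse c *\<^sub>R pprt (- (p - c *\<^sub>R q)) = pprt (inverse c *\<^sub>R (- (p - c *\<^sub>R q)))"
    using assms by (intro scaleR_pprt) simp
  then have e: "pprt (q - inverse c *\<^sub>R p) = inverse c *\<^sub>R pprt (- (p - c *\<^sub>R q))"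
    by (simp only: v)
  have "inf (pprt (p - c *\<^sub>R q)) (inverse c *\<^sub>R pprt (- (p - c *\<^sub>R q))) = 0"
    by (rule inf_scale_zero[OF zero_le_pprt zero_le_pprt pprt_inf_neg]) (use assms in simp)
  then show ?thesis by (simp only: e)
qed

lemma lh_linear: "lattice_hom T \<Longrightarrow> linear T" by (simp add: lattice_hom_def)
lemma lh_sup: "lattice_hom T \<Longrightarrow> T (sup x y) = sup (T x) (T y)" by (simp add: lattice_hom_def)

lemma lh_neg: "lattice_hom T \<Longrightarrow> T (- x) = - T x"
  using lh_linear linear_neg by blast
lemma lh_diff: "lattice_hom T \<Longrightarrow> T (x - y) = T x - T y"
  using lh_linear linear_diff by blast
lemma lh_zero: "lattice_hom T \<Longrightarrow> T 0 = 0"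
  using lh_linear linear_0 by blast
lemma lh_inf: "lattice_hom T \<Longrightarrow> T (inf x y) = inf (T x) (T y)"
  by (simp only: inf_eq_neg_sup[of x y] inf_eq_neg_sup[of "T x" "T y"] lh_neg lh_sup)
lemma lh_pprt: "lattice_hom T \<Longrightarrow> T (pprt x) = pprt (T x)"
  by (simp add: pprt_def lh_sup lh_zero)
lemma lh_labs: "lattice_hom T \<Longrightarrow> T (labs x) = labs (T x)"
  by (simp add: labs_def lh_sup lh_neg)
lemma lh_nonneg: "lattice_hom T \<Longrightarrow> 0 \<le> x \<Longrightarrow> 0 \<le> T x"
  by (metis le_zero_iff_pprt_id lh_pprt zero_le_pprt)
lemma lh_mono: "lattice_hom T \<Longrightarrow> x \<le> y \<Longrightarrow> T x \<le> T y"
  using lh_nonneg[of T "y - x"] by (simp add: lh_diff)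

definition psub :: "('a::real_vector \<times> real) set \<Rightarrow> bool" where
  "psub G \<longleftrightarrow> (0, 0) \<in> G \<and> (\<forall>x r z q. (x, r) \<in> G \<longrightarrow> (z, q) \<in> G \<longrightarrow> (x + z, r + q) \<in> G)
     \<and> (\<forall>x r t. (x, r) \<in> G \<longrightarrow> (t *\<^sub>R x, t * r) \<in> G)"

lemma hb_sublinear:
  fixes p :: "'a::real_vector \<Rightarrow> real"
  assumes sub: "\<And>x y. p (x + y) \<le> p x + p y"
    and hom: "\<And>t x. 0 \<le> t \<Longrightarrow> p (t *\<^sub>R x) = t * p x"
  shows "\<exists>f. linear f \<and> (\<forall>x. f x \<le> p x) \<and> f y = p y"
proof -
  have p0: "p 0 = 0" using hom[of 0 0] by simp
  have plow: "t * p y \<le> p (t *\<^sub>R y)" for t y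
  proof (cases "0 \<le> t")
    case True then show ?thesis by (simp add: hom)
  next
    case False
    have "0 = p (t *\<^sub>R y + (- t) *\<^sub>R y)" by (simp add: p0 flip: scaleR_add_left)
    also have "\<dots> \<le> p (t *\<^sub>R y) + p ((- t) *\<^sub>R y)" by (rule sub)
    also have "p ((- t) *\<^sub>R y) = - t * p y" using False by (intro hom) simp
    finally show ?thesis by simp
  qed
  define A where "A = {G. psub G \<and> (y, p y) \<in> G \<and> (\<forall>x r. (x, r) \<in> G \<longrightarrow> r \<le> p x)}"
  define G0 where "G0 = {(t *\<^sub>R y, t * p y) | t. True}"
  have G0A: "G0 \<in> A"
    unfolding A_def G0_def psub_def
  proof (rule CollectI, intro conjI allI impI)
    show "(0, 0) \<in> {(t *\<^sub>R y, t * p y) |t. True}" by (rule CollectI, rule exI[of _ 0]) simp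
    show "(y, p y) \<in> {(t *\<^sub>R y, t * p y) |t. True}" by (rule CollectI, rule exI[of _ 1]) simp
  next
    fix x r z q
    assume "(x, r) \<in> {(t *\<^sub>R y, t * p y) |t. True}" "(z, q) \<in> {(t *\<^sub>R y, t * p y) |t. True}"
    then obtain a b where "x = a *\<^sub>R y" "r = a * p y" "z = b *\<^sub>R y" "q = b * p y" by auto
    then show "(x + z, r + q) \<in> {(t *\<^sub>R y, t * p y) |t. True}"
      by (intro CollectI exI[of _ "a + b"]) (simp add: scaleR_add_left distrib_right)
  next
    fix x r t
    assume "(x, r) \<in> {(t *\<^sub>R y, t * p y) |t. True}"
    then obtain a where "x = a *\<^sub>R y" "r = a * p y" by auto
    then show "(t *\<^sub>R x, t * r) \<in> {(t *\<^sub>R y, t * p y) |t. True}"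
      by (intro CollectI exI[of _ "t * a"]) simp
  next
    fix x r
    assume "(x, r) \<in> {(t *\<^sub>R y, t * p y) |t. True}"
    then obtain a where "x = a *\<^sub>R y" "r = a * p y" by auto
    then show "r \<le> p x" using plow by simp
  qed
  have chains: "\<exists>U\<in>A. \<forall>X\<in>C. X \<subseteq> U" if C: "C \<in> chains A" for C
  proof (cases "C = {}")
    case True then show ?thesis using G0A by blast
  next
    case False
    have CA: "C \<subseteq> A" and ch: "\<And>X Y. X \<in> C \<Longrightarrow> Y \<in> C \<Longrightarrow> X \<subseteq> Y \<or> Y \<subseteq> X"
      using C unfolding chains_def chain_subset_def by auto
    have "\<Union>C \<in> A"
      unfolding A_def psub_def
    proof (rule CollectI, intro conjI allI impI)
      obtain X where X: "X \<in> C" using False by auto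
      then have "X \<in> A" using CA by auto
      then show "(0, 0) \<in> \<Union>C" "(y, p y) \<in> \<Union>C" using X unfolding A_def psub_def by auto
    next
      fix x r z q
      assume "(x, r) \<in> \<Union>C" "(z, q) \<in> \<Union>C"
      then obtain X Y where XY: "X \<in> C" "Y \<in> C" "(x, r) \<in> X" "(z, q) \<in> Y" by auto
      show "(x + z, r + q) \<in> \<Union>C"
      proof (cases "X \<subseteq> Y")
        case True
        then have "Y \<in> A" "(x, r) \<in> Y" using XY CA by auto
        then show ?thesis using XY unfolding A_def psub_def by blast
      next
        case False
        then have "Y \<subseteq> X" using ch XY by blast
        then have "X \<in> A" "(z, q) \<in> X" using XY CA by auto
        then show ?thesis using XY unfolding A_def psub_def by blast
      qed
    next
      fix x r t
      assume "(x, r) \<in> \<Union>C"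
      then obtain X where "X \<in> C" "(x, r) \<in> X" by auto
      moreover then have "X \<in> A" using CA by auto
      ultimately show "(t *\<^sub>R x, t * r) \<in> \<Union>C" unfolding A_def psub_def by blast
    next
      fix x r
      assume "(x, r) \<in> \<Union>C"
      then obtain X where "X \<in> C" "(x, r) \<in> X" by auto
      moreover then have "X \<in> A" using CA by auto
      ultimately show "r \<le> p x" unfolding A_def by blast
    qed
    then show ?thesis by blast
  qed
  have "\<exists>M\<in>A. \<forall>X\<in>A. M \<subseteq> X \<longrightarrow> X = M"
    by (intro Zorn_Lemma2 ballI chains)
  then obtain M where MA: "M \<in> A" and Mmax: "\<And>X. X \<in> A \<Longrightarrow> M \<subseteq> X \<Longrightarrow> X = M"
    by blast
  have Ms: "psub M" and My: "(y, p y) \<in> M" and Mp: "\<And>x r. (x, r) \<in> M \<Longrightarrow> r \<le> p x"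
    using MA unfolding A_def by auto
  have M0: "(0, 0) \<in> M" and Madd: "\<And>x r z q. (x, r) \<in> M \<Longrightarrow> (z, q) \<in> M \<Longrightarrow> (x + z, r + q) \<in> M"
    and Msc: "\<And>x r t. (x, r) \<in> M \<Longrightarrow> (t *\<^sub>R x, t * r) \<in> M"
    using Ms unfolding psub_def by auto
  have uniq: "r = s" if "(x, r) \<in> M" "(x, s) \<in> M" for x r s
  proof -
    have "(x + (-1) *\<^sub>R x, r + (-1) * s) \<in> M" by (rule Madd[OF that(1) Msc[OF that(2)]])
    then have a: "r - s \<le> 0" using Mp[of 0 "r - s"] p0 by simp
    have "(x + (-1) *\<^sub>R x, s + (-1) * r) \<in> M" by (rule Madd[OF that(2) Msc[OF that(1)]])
    then have b: "s - r \<le> 0" using Mp[of 0 "s - r"] p0 by simp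
    from a b show ?thesis by simp
  qed
  have total: "\<exists>r. (x0, r) \<in> M" for x0
  proof (rule ccontr)
    assume nx: "\<nexists>r. (x0, r) \<in> M"
    define S where "S = {r - p (x - x0) | x r. (x, r) \<in> M}"
    have key: "r - p (x - x0) \<le> p (z + x0) - q" if "(x, r) \<in> M" "(z, q) \<in> M" for x r z q
    proof -
      have "r + q \<le> p (x + z)" using Mp[OF Madd[OF that]] .
      also have "x + z = (x - x0) + (z + x0)" by simp
      also have "p \<dots> \<le> p (x - x0) + p (z + x0)" by (rule sub)
      finally show ?thesis by simp
    qed
    have Sne: "S \<noteq> {}" using M0 unfolding S_def by blast
    have Sbd: "bdd_above S" unfolding S_def bdd_above_def using key[OF _ M0] by auto
    define c where "c = Sup S"
    have c1: "r - p (x - x0) \<le> c" if "(x, r) \<in> M" for x r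
      unfolding c_def by (rule cSup_upper[OF _ Sbd]) (use that S_def in blast)
    have c2: "c \<le> p (z + x0) - q" if "(z, q) \<in> M" for z q
      unfolding c_def by (rule cSup_least[OF Sne]) (use key that S_def in blast)
    define M' where "M' = {(x + t *\<^sub>R x0, r + t * c) | x r t. (x, r) \<in> M}"
    have "M' \<in> A"
      unfolding A_def psub_def
    proof (rule CollectI, intro conjI allI impI)
      show "(0, 0) \<in> M'" unfolding M'_def using M0 by force
      show "(y, p y) \<in> M'" unfolding M'_def using My by force
    next
      fix x r z q
      assume "(x, r) \<in> M'" "(z, q) \<in> M'"
      then obtain x1 r1 t1 x2 r2 t2 where e: "x = x1 + t1 *\<^sub>R x0" "r = r1 + t1 * c" "(x1, r1) \<in> M"
        "z = x2 + t2 *\<^sub>R x0" "q = r2 + t2 * c" "(x2, r2) \<in> M"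
        unfolding M'_def by blast
      have "(x1 + x2, r1 + r2) \<in> M" using Madd e by blast
      moreover have "x + z = (x1 + x2) + (t1 + t2) *\<^sub>R x0" "r + q = (r1 + r2) + (t1 + t2) * c"
        using e by (simp_all add: algebra_simps)
      ultimately show "(x + z, r + q) \<in> M'" unfolding M'_def by blast
    next
      fix x r t
      assume "(x, r) \<in> M'"
      then obtain x1 r1 t1 where e: "x = x1 + t1 *\<^sub>R x0" "r = r1 + t1 * c" "(x1, r1) \<in> M"
        unfolding M'_def by blast
      have "(t *\<^sub>R x1, t * r1) \<in> M" using Msc e by blast
      moreover have "t *\<^sub>R x = t *\<^sub>R x1 + (t * t1) *\<^sub>R x0" "t * r = t * r1 + (t * t1) * c"
        using e by (simp_all add: algebra_simps)
      ultimately show "(t *\<^sub>R x, t * r) \<in> M'" unfolding M'_def by blast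
    next
      fix x r
      assume "(x, r) \<in> M'"
      then obtain x1 r1 t where e: "x = x1 + t *\<^sub>R x0" "r = r1 + t * c" "(x1, r1) \<in> M"
        unfolding M'_def by blast
      show "r \<le> p x"
      proof (cases "t = 0")
        case True then show ?thesis using e Mp by simp
      next
        case False
        show ?thesis
        proof (cases "0 < t")
          case True
          have m: "(inverse t *\<^sub>R x1, inverse t * r1) \<in> M" using Msc e by blast
          have "c \<le> p (inverse t *\<^sub>R x1 + x0) - inverse t * r1" by (rule c2[OF m])
          then have "t * c \<le> t * p (inverse t *\<^sub>R x1 + x0) - r1"
            using True by (simp add: field_simps)
          also have "t * p (inverse t *\<^sub>R x1 + x0) = p (t *\<^sub>R (inverse t *\<^sub>R x1 + x0))"
            using True by (simp add: hom)
          also have "t *\<^sub>R (inverse t *\<^sub>R x1 + x0) = x1 + t *\<^sub>R x0"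
            using True by (simp add: scaleR_add_right)
          finally show ?thesis using e by simp
        next
          case False
          then have sp: "0 < - t" using \<open>t \<noteq> 0\<close> by simp
          define s where "s = - t"
          have s: "0 < s" using sp s_def by simp
          have m: "(inverse s *\<^sub>R x1, inverse s * r1) \<in> M" using Msc e by blast
          have "inverse s * r1 - p (inverse s *\<^sub>R x1 - x0) \<le> c" by (rule c1[OF m])
          then have "r1 - s * c \<le> s * p (inverse s *\<^sub>R x1 - x0)"
            using s by (simp add: field_simps)
          also have "s * p (inverse s *\<^sub>R x1 - x0) = p (s *\<^sub>R (inverse s *\<^sub>R x1 - x0))"
            using s by (simp add: hom)
          also have "s *\<^sub>R (inverse s *\<^sub>R x1 - x0) = x1 + t *\<^sub>R x0"
            using s by (simp add: scaleR_diff_right s_def)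
          finally show ?thesis using e s_def by simp
        qed
      qed
    qed
    moreover have "M \<subseteq> M'"
    proof
      fix a assume "a \<in> M"
      then obtain x r where "a = (x, r)" "(x, r) \<in> M" by (cases a) auto
      then show "a \<in> M'" unfolding M'_def by (intro CollectI exI[of _ x] exI[of _ r] exI[of _ 0]) simp
    qed
    ultimately have "M' = M" using Mmax by blast
    moreover have "(x0, c) \<in> M'" unfolding M'_def using M0
      by (intro CollectI exI[of _ 0] exI[of _ 0] exI[of _ 1]) simp
    ultimately show False using nx by blast
  qed
  define f where "f x = (THE r. (x, r) \<in> M)" for x
  have fM: "(x, f x) \<in> M" for x
    unfolding f_def using total[of x] uniq by (metis theI)
  have fe: "f x = r" if "(x, r) \<in> M" for x r using uniq[OF that fM] by simp
  have "linear f"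
  proof (rule linearI)
    show "f (b1 + b2) = f b1 + f b2" for b1 b2 using fe[OF Madd[OF fM fM]] .
    show "f (r *\<^sub>R b) = r *\<^sub>R f b" for r b using fe[OF Msc[OF fM]] by simp
  qed
  moreover have "\<forall>x. f x \<le> p x" using Mp fM by blast
  moreover have "f y = p y" using fe[OF My] .
  ultimately show ?thesis by blast
qed

lemma pos_norming:
  fixes y :: "'a::banach_lattice"
  shows "\<exists>\<phi>. bounded_linear \<phi> \<and> (\<forall>x. \<phi> x \<le> norm (pprt x)) \<and> \<phi> y = norm (pprt y)"
proof -
  have "\<exists>f. linear f \<and> (\<forall>x. f x \<le> norm (pprt x)) \<and> f y = norm (pprt y)"
  proof (rule hb_sublinear)
    fix x z :: 'a
    have "norm (pprt (x + z)) \<le> norm (pprt x + pprt z)"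
      by (rule norm_mono_pos[OF zero_le_pprt pprt_subadd])
    also have "\<dots> \<le> norm (pprt x) + norm (pprt z)" by (rule norm_triangle_ineq)
    finally show "norm (pprt (x + z)) \<le> norm (pprt x) + norm (pprt z)" .
  next
    fix t :: real and x :: 'a
    assume t: "0 \<le> t"
    have "pprt (t *\<^sub>R x) = t *\<^sub>R pprt x" by (rule scaleR_pprt[OF t, symmetric])
    then show "norm (pprt (t *\<^sub>R x)) = t * norm (pprt x)" using t by simp
  qed
  then obtain f where f: "linear f" "\<And>x. f x \<le> norm (pprt x)" "f y = norm (pprt y)" by blast
  have fb: "norm (f x) \<le> norm x * 1" for x
  proof -
    have "f x \<le> norm x" using f(2)[of x] norm_pprt_le[of x] by linarith
    moreover have "- f x \<le> norm x"
      using f(2)[of "-x"] norm_pprt_le[of "-x"] linear_neg[OF f(1)] by simp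
    ultimately show ?thesis by simp
  qed
  have "bounded_linear f"
    using f(1) fb by (intro bounded_linear_intro[where K=1]) (auto simp: linear_iff)
  then show ?thesis using f by blast
qed

lemma posf_nonneg:
  fixes \<phi> :: "'a::banach_lattice \<Rightarrow> real"
  assumes "bounded_linear \<phi>" "\<And>x. \<phi> x \<le> norm (pprt x)" "0 \<le> x"
  shows "0 \<le> \<phi> x"
proof -
  have "\<phi> (- x) \<le> 0" using assms(2)[of "-x"] assms(3) by simp
  moreover have "\<phi> (- x) = - \<phi> x" using assms(1) by (simp add: linear_simps)
  ultimately show ?thesis by simp
qed

lemma posf_le_norm:
  fixes \<phi> :: "'a::banach_lattice \<Rightarrow> real"
  assumes "\<And>x. \<phi> x \<le> norm (pprt x)"
  shows "\<phi> x \<le> norm x"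
  using assms[of x] norm_pprt_le[of x] by linarith

lemma posf_mono:
  fixes \<phi> :: "'a::banach_lattice \<Rightarrow> real"
  assumes "bounded_linear \<phi>" "\<And>x. \<phi> x \<le> norm (pprt x)" "x \<le> y"
  shows "\<phi> x \<le> \<phi> y"
proof -
  have "0 \<le> \<phi> (y - x)" using posf_nonneg[OF assms(1,2)] assms(3) by simp
  then show ?thesis using assms(1) by (simp add: linear_simps)
qed

lemma dec_cauchy:
  fixes a :: "nat \<Rightarrow> 'a::banach_lattice"
  assumes oc: "order_continuous TYPE('a)" and dec: "\<And>n. a (Suc n) \<le> a n" and lb: "\<And>n. b \<le> a n"
  shows "Cauchy a"
proof -
  have anti: "a n \<le> a m" if "m \<le> n" for m n
    using lift_Suc_antimono_le[of a, OF dec that] .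
  define LB where "LB = {y. \<forall>n. y \<le> a n}"
  define D where "D = {a n - y | n y. y \<in> LB}"
  have bLB: "b \<in> LB" using lb LB_def by auto
  have small: "\<forall>e>0. \<exists>x\<in>D. norm x < e"
  proof -
    have "D \<noteq> {}" using bLB D_def by blast
    moreover have "\<forall>x\<in>D. \<forall>y\<in>D. \<exists>z\<in>D. z \<le> x \<and> z \<le> y"
    proof (intro ballI)
      fix x x' assume "x \<in> D" "x' \<in> D"
      then obtain n y n' y' where e: "x = a n - y" "y \<in> LB" "x' = a n' - y'" "y' \<in> LB"
        unfolding D_def by blast
      have s: "sup y y' \<in> LB" using e(2,4) unfolding LB_def by simp
      have "a (max n n') - sup y y' \<le> a n - y"
        by (rule diff_mono) (rule anti, simp, simp)
      moreover have "a (max n n') - sup y y' \<le> a n' - y'"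
        by (rule diff_mono) (rule anti, simp, simp)
      ultimately have "a (max n n') - sup y y' \<le> x" "a (max n n') - sup y y' \<le> x'"
        using e(1,3) by simp_all
      then show "\<exists>z\<in>D. z \<le> x \<and> z \<le> x'" using s unfolding D_def by blast
    qed
    moreover have "\<forall>x\<in>D. 0 \<le> x" unfolding D_def LB_def by auto
    moreover have "\<forall>z. (\<forall>x\<in>D. z \<le> x) \<longrightarrow> z \<le> 0"
    proof (intro allI impI)
      fix z assume z: "\<forall>x\<in>D. z \<le> x"
      have step: "y + z \<in> LB" if "y \<in> LB" for y
      proof -
        have "z \<le> a n - y" for n using z that unfolding D_def by blast
        then show ?thesis unfolding LB_def by (simp add: le_diff_eq add.commute)
      qed
      have "b + real k *\<^sub>R z \<in> LB" for k
      proof (induction k)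
        case 0 then show ?case using bLB by simp
        case (Suc k)
        have "b + real (Suc k) *\<^sub>R z = (b + real k *\<^sub>R z) + z" by (simp add: algebra_simps)
        then show ?case using step[OF Suc.IH] by (simp add: add.assoc)
      qed
      then have "real k *\<^sub>R z \<le> a 0 - b" for k unfolding LB_def by (simp add: le_diff_eq add.commute)
      then show "z \<le> 0" by (rule archimedean_lattice)
    qed
    ultimately show ?thesis using oc unfolding order_continuous_def by blast
  qed
  show ?thesis
  proof (rule CauchyI)
    fix e :: real assume "0 < e"
    then obtain x where "x \<in> D" "norm x < e" using small by blast
    then obtain N y where x: "x = a N - y" "y \<in> LB" unfolding D_def by blast
    have "norm (a m - a n) < e" if "N \<le> m" "N \<le> n" for m n
    proof -
      have "a m - a n \<le> a N - y" using anti[OF that(1)] x(2) unfolding LB_def by (intro diff_mono) auto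
      moreover have "- (a m - a n) \<le> a N - y" using anti[OF that(2)] x(2) unfolding LB_def
        by (simp, intro diff_mono) auto
      ultimately have "norm (a m - a n) \<le> norm (a N - y)" by (rule norm_le_of_bounds)
      then show ?thesis using \<open>norm x < e\<close> x by simp
    qed
    then show "\<exists>M. \<forall>m\<ge>M. \<forall>n\<ge>M. norm (a m - a n) < e" by blast
  qed
qed

lemma inc_convergent:
  fixes a :: "nat \<Rightarrow> 'a::banach_lattice"
  assumes oc: "order_continuous TYPE('a)" and inc: "\<And>n. a n \<le> a (Suc n)" and ub: "\<And>n. a n \<le> b"
  shows "convergent a"
proof -
  have "Cauchy (\<lambda>n. - a n)"
    by (rule dec_cauchy[OF oc, of _ "- b"]) (simp_all add: inc ub)
  then have "convergent (\<lambda>n. - a n)" by (simp add: Cauchy_convergent_iff)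
  then show ?thesis by (simp add: convergent_minus_iff[symmetric])
qed

lemma sup_le_add_nonneg: "0 \<le> (A::'a::banach_lattice) \<Longrightarrow> 0 \<le> B \<Longrightarrow> sup A B \<le> A + B"
  by (intro sup_least) (simp_all add: add_increasing add_increasing2)

lemma lemC:
  fixes v :: "nat \<Rightarrow> 'a::banach_lattice" and w :: 'a
  assumes oc: "order_continuous TYPE('a)" and v0: "\<And>n. 0 \<le> v n" and vw: "\<And>n. v n \<le> w"
    and wn: "weakly_null v"
  shows "(\<lambda>n. norm (v n)) \<longlonglongrightarrow> 0"
proof (rule ccontr)
  assume nc: "\<not> (\<lambda>n. norm (v n)) \<longlonglongrightarrow> 0"
  then obtain \<delta> where \<delta>: "0 < \<delta>" and io: "\<And>N. \<exists>n\<ge>N. \<delta> \<le> norm (v n)"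
    unfolding LIMSEQ_iff by (auto simp: not_less)
  have "\<forall>y::'a. \<exists>\<phi>. bounded_linear \<phi> \<and> (\<forall>x. \<phi> x \<le> norm (pprt x)) \<and> \<phi> y = norm (pprt y)"
    using pos_norming by blast
  then have "\<exists>nf. \<forall>y::'a. bounded_linear (nf y) \<and> (\<forall>x. nf y x \<le> norm (pprt x)) \<and> nf y y = norm (pprt y)"
    by (rule choice)
  then obtain nf where nf: "\<forall>y::'a. bounded_linear (nf y) \<and> (\<forall>x. nf y x \<le> norm (pprt x)) \<and> nf y y = norm (pprt y)"
    by blast
  have nf_bl: "\<And>y. bounded_linear (nf y)" and nf_le: "\<And>y x. nf y x \<le> norm (pprt x)"
    and nf_y: "\<And>y. nf y y = norm (pprt y)" using nf by blast+
  have ex: "\<exists>n. N \<le> n \<and> \<delta> \<le> norm (v n) \<and> \<psi> (v n) \<le> \<epsilon>"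
    if bl: "bounded_linear \<psi>" and ep: "0 < \<epsilon>" for \<psi> :: "'a \<Rightarrow> real" and N \<epsilon>
  proof -
    have "(\<lambda>n. \<psi> (v n)) \<longlonglongrightarrow> 0" using wn bl unfolding weakly_null_def by blast
    then obtain M where M: "\<And>n. n \<ge> M \<Longrightarrow> norm (\<psi> (v n) - 0) < \<epsilon>"
      using ep unfolding LIMSEQ_iff by blast
    obtain n where n: "n \<ge> max N M" "\<delta> \<le> norm (v n)" using io by blast
    have "\<psi> (v n) \<le> \<epsilon>" using M[of n] n by auto
    then show ?thesis using n by auto
  qed
  define pick where "pick \<psi> N \<epsilon> = (SOME n. N \<le> n \<and> \<delta> \<le> norm (v n) \<and> \<psi> (v n) \<le> \<epsilon>)"
    for \<psi> :: "'a \<Rightarrow> real" and N \<epsilon>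
  have pick: "\<And>\<psi> N \<epsilon>. bounded_linear \<psi> \<Longrightarrow> 0 < \<epsilon> \<Longrightarrow>
      N \<le> pick \<psi> N \<epsilon> \<and> \<delta> \<le> norm (v (pick \<psi> N \<epsilon>)) \<and> \<psi> (v (pick \<psi> N \<epsilon>)) \<le> \<epsilon>"
    unfolding pick_def by (rule someI_ex, rule ex)
  define n0 where "n0 = pick (\<lambda>x. 0) 0 1"
  define st where "st = rec_nat (n0, nf (v n0))
     (\<lambda>k p. (pick (snd p) (Suc (fst p)) (\<delta> * (1/2)^(k+3)),
             \<lambda>x. snd p x + nf (v (pick (snd p) (Suc (fst p)) (\<delta> * (1/2)^(k+3)))) x))"
  define idx where "idx k = fst (st k)" for k
  define \<psi> where "\<psi> k = snd (st k)" for k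
  define u where "u k = v (idx k)" for k
  define \<phi> where "\<phi> k = nf (u k)" for k
  have idx0: "idx 0 = n0" and psi0: "\<psi> 0 = \<phi> 0"
    by (simp_all add: idx_def \<psi>_def st_def \<phi>_def u_def)
  have idxS: "idx (Suc k) = pick (\<psi> k) (Suc (idx k)) (\<delta> * (1/2)^(k+3))" for k
    by (simp add: idx_def \<psi>_def st_def)
  have psiS: "\<psi> (Suc k) = (\<lambda>x. \<psi> k x + \<phi> (Suc k) x)" for k
    by (simp add: idx_def \<psi>_def st_def \<phi>_def u_def)
  have phi_bl: "bounded_linear (\<phi> k)" for k using nf_bl \<phi>_def by simp
  have phi_le: "\<phi> k x \<le> norm (pprt x)" for k x using nf_le \<phi>_def by simp
  have phi_nn: "0 \<le> x \<Longrightarrow> 0 \<le> \<phi> k x" for k x by (rule posf_nonneg[OF phi_bl phi_le])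
  have psi_bl: "bounded_linear (\<psi> k)" for k
  proof (induction k)
    case 0 then show ?case using psi0 phi_bl by simp
  next
    case (Suc k) then show ?case unfolding psiS by (intro bounded_linear_add phi_bl)
  qed
  have u0: "0 \<le> u k" for k using v0 u_def by simp
  have uw: "u k \<le> w" for k using vw u_def by simp
  have udelta: "\<delta> \<le> norm (u k)" for k
  proof (cases k)
    case 0
    have "bounded_linear (\<lambda>x::'a. 0::real)" by (rule bounded_linear_zero)
    then show ?thesis using pick[of "\<lambda>x. 0" 1 0] 0 idx0 u_def n0_def by simp
  next
    case (Suc k')
    have pos: "0 < \<delta> * (1/2)^(k'+3)" using \<delta> by simp
    show ?thesis using pick[OF psi_bl pos, of "Suc (idx k')"] Suc idxS u_def by simp
  qed
  have psi_small: "\<psi> k (u (Suc k)) \<le> \<delta> * (1/2)^(k+3)" for k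
  proof -
    have pos: "0 < \<delta> * (1/2)^(k+3)" using \<delta> by simp
    show ?thesis using pick[OF psi_bl pos, of "Suc (idx k)"] idxS u_def by simp
  qed
  have psi_nn: "0 \<le> x \<Longrightarrow> 0 \<le> \<psi> k x" for k x
    by (induction k) (simp_all add: psi0 psiS phi_nn)
  have phi_le_psi: "0 \<le> x \<Longrightarrow> j \<le> k \<Longrightarrow> \<phi> j x \<le> \<psi> k x" for j k x
  proof (induction k)
    case 0 then show ?case by (simp add: psi0)
  next
    case (Suc k)
    show ?case
    proof (cases "j = Suc k")
      case True then show ?thesis using psi_nn[OF Suc.prems(1), of k] by (simp add: psiS)
    next
      case False
      then have "\<phi> j x \<le> \<psi> k x" using Suc by simp
      then show ?thesis using phi_nn[OF Suc.prems(1), of "Suc k"] by (simp add: psiS)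
    qed
  qed
  have phi_small: "\<phi> K (u k) \<le> \<delta> * (1/2)^(k+2)" if Kk: "K < k" for K k
  proof -
    obtain k' where k: "k = Suc k'" "K \<le> k'" using Kk by (cases k) auto
    have "\<phi> K (u (Suc k')) \<le> \<psi> k' (u (Suc k'))" by (rule phi_le_psi[OF u0 k(2)])
    also have "\<dots> \<le> \<delta> * (1/2)^(k'+3)" by (rule psi_small)
    finally have "\<phi> K (u k) \<le> \<delta> * (1/2)^(k'+3)" by (simp only: k(1))
    moreover have "k + 2 = k' + 3" using k by simp
    ultimately show ?thesis by (simp only:)
  qed
  define s where "s K = rec_nat (u K) (\<lambda>m acc. sup acc (u (K + Suc m)))" for K
  have s0: "s K 0 = u K" for K by (simp add: s_def)
  have sS: "s K (Suc m) = sup (s K m) (u (K + Suc m))" for K m by (simp add: s_def)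
  have s_nn: "0 \<le> s K m" for K m
    by (induction m) (simp_all add: s0 sS u0 le_supI1)
  have s_w: "s K m \<le> w" for K m
    by (induction m) (simp_all add: s0 sS uw)
  have s_inc: "s K m \<le> s K (Suc m)" for K m by (simp add: sS)
  have s_u: "u K \<le> s K m" for K m
    by (induction m) (simp_all add: s0 sS le_supI1)
  have s_shift: "s (Suc K) m \<le> s K (Suc m)" for K m
  proof (induction m)
    case 0 then show ?case by (simp add: s0 sS)
  next
    case (Suc m)
    have "s (Suc K) (Suc m) = sup (s (Suc K) m) (u (Suc K + Suc m))" by (rule sS)
    also have "\<dots> \<le> sup (s K (Suc m)) (u (K + Suc (Suc m)))"
      using Suc.IH by (intro sup_mono) simp_all
    also have "\<dots> = s K (Suc (Suc m))" by (simp add: sS)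
    finally show ?case .
  qed
  have s_phi: "\<phi> K (s (Suc K) m) \<le> \<delta> / 2 - \<delta> * (1/2)^(K+m+3)" for K m
  proof (induction m)
    case 0
    have "\<phi> K (u (Suc K)) \<le> \<delta> * (1/2)^(Suc K + 2)" by (rule phi_small) simp
    moreover have "\<delta> * (1/2::real)^(Suc K + 2) + \<delta> * (1/2)^(K+3) \<le> \<delta> / 2"
    proof -
      have "(1/2::real)^K \<le> 1" by (rule power_le_one) simp_all
      then have hd: "\<delta> * (1/2::real)^K \<le> \<delta>" using \<delta> by (simp add: mult_left_le)
      have e1: "\<delta> * (1/2::real)^(Suc K + 2) = \<delta> * (1/2)^K / 8" by (simp add: power_add power3_eq_cube)
      have e2: "\<delta> * (1/2::real)^(K+3) = \<delta> * (1/2)^K / 8" by (simp add: power_add power3_eq_cube)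
      show ?thesis unfolding e1 e2 using hd \<delta> by linarith
    qed
    ultimately show ?case by (simp add: s0)
  next
    case (Suc m)
    define r where "r = \<delta> * (1/2::real)^(K+m+3)"
    have A: "\<phi> K (s (Suc K) (Suc m)) \<le> \<phi> K (s (Suc K) m + u (Suc K + Suc m))"
      unfolding sS by (rule posf_mono[OF phi_bl phi_le sup_le_add_nonneg[OF s_nn u0]])
    have A2: "\<phi> K (s (Suc K) m + u (Suc K + Suc m)) = \<phi> K (s (Suc K) m) + \<phi> K (u (Suc K + Suc m))"
      using phi_bl by (simp add: linear_simps)
    have B: "\<phi> K (u (Suc K + Suc m)) \<le> \<delta> * (1/2)^(Suc K + Suc m + 2)" by (rule phi_small) simp
    have B2: "\<delta> * (1/2::real)^(Suc K + Suc m + 2) = r / 2"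
    proof -
      have "Suc K + Suc m + 2 = Suc (K + m + 3)" by simp
      then show ?thesis unfolding r_def by (simp only: power_Suc; simp)
    qed
    have C: "\<delta> * (1/2::real)^(K + Suc m + 3) = r / 2"
    proof -
      have "K + Suc m + 3 = Suc (K + m + 3)" by simp
      then show ?thesis unfolding r_def by (simp only: power_Suc; simp)
    qed
    show ?case using A A2 B B2 C Suc.IH unfolding r_def[symmetric] by linarith
  qed
  have s_conv: "convergent (s K)" for K by (rule inc_convergent[OF oc, of "s K" w]) (simp_all add: s_inc s_w)
  define a where "a K = lim (s K)" for K
  have s_lim: "s K \<longlonglongrightarrow> a K" for K unfolding a_def using s_conv[of K] by (simp only: convergent_LIMSEQ_iff)
  have a_u: "u K \<le> a K" for K by (rule le_limit[OF s_lim]) (simp add: s_u)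
  have a_nn: "0 \<le> a K" for K by (rule le_limit[OF s_lim]) (simp add: s_nn)
  have a_dec: "a (Suc K) \<le> a K" for K
  proof -
    have "(\<lambda>m. s K (Suc m) - s (Suc K) m) \<longlonglongrightarrow> a K - a (Suc K)"
      by (intro tendsto_diff LIMSEQ_Suc s_lim)
    then have "0 \<le> a K - a (Suc K)" by (rule nonneg_limit) (simp add: s_shift)
    then show ?thesis by simp
  qed
  have a_phi: "\<phi> K (a (Suc K)) \<le> \<delta> / 2" for K
  proof -
    have "(\<lambda>m. \<phi> K (s (Suc K) m)) \<longlonglongrightarrow> \<phi> K (a (Suc K))"
      by (rule bounded_linear.tendsto[OF phi_bl s_lim])
    moreover have "\<forall>m\<ge>0. \<phi> K (s (Suc K) m) \<le> \<delta> / 2"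
      using s_phi \<delta> by (smt (verit) mult_pos_pos zero_less_power zero_less_divide_iff)
    ultimately show ?thesis by (intro LIMSEQ_le_const2) blast+
  qed
  have a_gap: "\<delta> / 2 \<le> norm (a K - a (Suc K))" for K
  proof -
    have "\<phi> K (u K) = norm (u K)" using nf_y u0 \<phi>_def by simp
    then have "\<delta> \<le> \<phi> K (u K)" using udelta by simp
    moreover have "\<phi> K (u K - a (Suc K)) \<le> \<phi> K (a K - a (Suc K))"
      by (rule posf_mono[OF phi_bl phi_le]) (simp add: a_u)
    moreover have "\<phi> K (u K - a (Suc K)) = \<phi> K (u K) - \<phi> K (a (Suc K))"
      using phi_bl by (simp add: linear_simps)
    moreover have "\<phi> K (a K - a (Suc K)) \<le> norm (a K - a (Suc K))" by (rule posf_le_norm[OF phi_le])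
    ultimately show ?thesis using a_phi[of K] by linarith
  qed
  have "Cauchy a" by (rule dec_cauchy[OF oc, of a 0]) (simp_all add: a_dec a_nn)
  then obtain M where "\<forall>m\<ge>M. \<forall>n\<ge>M. norm (a m - a n) < \<delta> / 2"
    using CauchyD[of a "\<delta> / 2"] \<delta> by auto
  then have "norm (a M - a (Suc M)) < \<delta> / 2" by auto
  with a_gap[of M] show False by simp
qed

lemma term_le_sum:
  fixes f :: "nat \<Rightarrow> 'a::banach_lattice"
  assumes "finite A" "i \<in> A" "\<And>j. j \<in> A \<Longrightarrow> 0 \<le> f j"
  shows "f i \<le> sum f A"
proof -
  have "sum f A = f i + sum f (A - {i})" using assms by (simp add: sum.remove)
  moreover have "0 \<le> sum f (A - {i})" using assms by (intro sum_nonneg) auto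
  ultimately show ?thesis by simp
qed

theorem corollary2p17:
  fixes T :: "'a::banach_lattice \<Rightarrow> 'b::banach_lattice"
  assumes "order_continuous TYPE('a) \<or> order_continuous TYPE('b)"
    and "bounded_linear T"
    and "lattice_hom T"
    and "L_weakly_compact T"
  shows "uaw_DP T"
  unfolding uaw_DP_def
proof (intro conjI allI impI)
  note oc = assms(1) and bl = assms(2) and lh = assms(3) and lw = assms(4)
  show "bounded_linear T" by (rule bl)
  fix x :: "nat \<Rightarrow> 'a"
  assume xa: "bounded (range x) \<and> uaw_null x"
  define z where "z n = labs (x n)" for n
  have z0: "0 \<le> z n" for n unfolding z_def by (rule labs_nonneg)
  obtain M where M: "0 < M" "\<And>n. norm (x n) \<le> M" using xa unfolding bounded_pos by auto
  have zM: "norm (z n) \<le> M" for n unfolding z_def norm_labs by (rule M(2))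
  obtain K where K: "0 < K" "\<And>v. norm (T v) \<le> norm v * K"
    using bounded_linear.pos_bounded[OF bl] by blast
  have Tlin: "T (a + b) = T a + T b" "T (a - b) = T a - T b" "T (c *\<^sub>R a) = c *\<^sub>R T a" for a b c
    using bl by (simp_all add: linear_simps)
  have Tz: "norm (T (x n)) = norm (T (z n))" for n
    unfolding z_def lh_labs[OF lh] norm_labs ..
  have stepB: "(\<lambda>n. norm (T (inf (z n) w))) \<longlonglongrightarrow> 0" if w0: "0 \<le> w" for w
  proof -
    have wn: "weakly_null (\<lambda>n. inf (z n) w)" using xa w0 unfolding uaw_null_def z_def by blast
    have v0: "0 \<le> inf (z n) w" for n using z0 w0 by simp
    have vw: "inf (z n) w \<le> w" for n by simp
    show ?thesis
    proof (cases "order_continuous TYPE('a)")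
      case True
      have "(\<lambda>n. norm (inf (z n) w)) \<longlonglongrightarrow> 0" by (rule lemC[OF True v0 vw wn])
      then have "(\<lambda>n. norm (inf (z n) w) * K) \<longlonglongrightarrow> 0" by (simp add: tendsto_mult_left_zero)
      then show ?thesis
        by (rule Lim_null_comparison[rotated]) (simp add: K(2))
    next
      case False
      then have ocb: "order_continuous TYPE('b)" using oc by simp
      have W: "weakly_null (\<lambda>n. T (inf (z n) w))"
        unfolding weakly_null_def
      proof (intro allI impI)
        fix f :: "'b \<Rightarrow> real" assume "bounded_linear f"
        then have "bounded_linear (\<lambda>v. f (T v))" using bounded_linear_compose bl by blast
        then show "(\<lambda>n. f (T (inf (z n) w))) \<longlonglongrightarrow> 0" using wn unfolding weakly_null_def by blast
      qed
      have N: "0 \<le> T (inf (z n) w)" for n by (rule lh_nonneg[OF lh v0])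
      have L: "T (inf (z n) w) \<le> T w" for n by (rule lh_mono[OF lh vw])
      show ?thesis by (rule lemC[OF ocb N L W])
    qed
  qed
  show "(\<lambda>n. norm (T (x n))) \<longlonglongrightarrow> 0"
  proof (rule ccontr)
    assume nc: "\<not> (\<lambda>n. norm (T (x n))) \<longlonglongrightarrow> 0"
    then obtain \<delta> where \<delta>: "0 < \<delta>" and io: "\<And>N. \<exists>n\<ge>N. \<delta> \<le> norm (T (z n))"
      unfolding LIMSEQ_iff Tz by (auto simp: not_less)
    have ex: "\<exists>n. \<delta> \<le> norm (T (z n)) \<and> norm (T (inf (z n) w)) \<le> \<delta> / 2" if w0: "0 \<le> w" for w
    proof -
      obtain N where N: "\<And>n. n \<ge> N \<Longrightarrow> norm (norm (T (inf (z n) w)) - 0) < \<delta> / 2"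
        using stepB[OF w0] \<delta> unfolding LIMSEQ_iff by (meson half_gt_zero)
      obtain n where "n \<ge> N" "\<delta> \<le> norm (T (z n))" using io by blast
      then show ?thesis using N[of n] by (intro exI[of _ n]) auto
    qed
    define pick where "pick w = (SOME n. \<delta> \<le> norm (T (z n)) \<and> norm (T (inf (z n) w)) \<le> \<delta> / 2)" for w
    have pick: "\<delta> \<le> norm (T (z (pick w))) \<and> norm (T (inf (z (pick w)) w)) \<le> \<delta> / 2" if "0 \<le> w" for w
      unfolding pick_def by (rule someI_ex, rule ex[OF that])
    define Q where "Q = rec_nat 0 (\<lambda>k q. q + z (pick ((4::real)^k *\<^sub>R q)))"
    define idx where "idx k = pick ((4::real)^k *\<^sub>R Q k)" for k
    have Q0: "Q 0 = 0" and QS: "Q (Suc k) = Q k + z (idx k)" for k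
      by (simp_all add: Q_def idx_def)
    have Qsum: "Q k = (\<Sum>i<k. z (idx i))" for k
      by (induction k) (simp_all add: Q0 QS)
    have Q_nn: "0 \<le> Q k" for k unfolding Qsum by (intro sum_nonneg z0)
    have Q_ge: "z (idx m) \<le> Q k" if "m < k" for m k
      unfolding Qsum by (rule term_le_sum[of "{..<k}" m "\<lambda>i. z (idx i)"]) (use that z0 in auto)
    define y where "y k = T (z (idx k))" for k
    have y0: "0 \<le> y k" for k unfolding y_def by (rule lh_nonneg[OF lh z0])
    have yK: "norm (y k) \<le> M * K" for k
    proof -
      have "norm (y k) \<le> norm (z (idx k)) * K" unfolding y_def by (rule K(2))
      also have "\<dots> \<le> M * K" using zM K(1) by (simp add: mult_right_mono)
      finally show ?thesis .
    qed
    have TQ_nn: "0 \<le> T (Q k)" for k by (rule lh_nonneg[OF lh Q_nn])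
    have TQ_ge: "y m \<le> T (Q k)" if "m < k" for m k unfolding y_def by (rule lh_mono[OF lh Q_ge[OF that]])
    have e_big: "\<delta> / 2 \<le> norm (pprt (y k - (4::real)^k *\<^sub>R T (Q k)))" for k
    proof -
      have w0: "0 \<le> (4::real)^k *\<^sub>R Q k" using Q_nn by (simp add: scaleR_nonneg_nonneg)
      have p: "\<delta> \<le> norm (T (z (idx k)))" "norm (T (inf (z (idx k)) ((4::real)^k *\<^sub>R Q k))) \<le> \<delta> / 2"
        using pick[OF w0] unfolding idx_def by auto
      have "T (z (idx k)) = T (inf (z (idx k)) ((4::real)^k *\<^sub>R Q k)) + T (pprt (z (idx k) - (4::real)^k *\<^sub>R Q k))"
        using decomp_inf_pprt[of "z (idx k)" "(4::real)^k *\<^sub>R Q k"] Tlin(1) by metis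
      also have "T (pprt (z (idx k) - (4::real)^k *\<^sub>R Q k)) = pprt (y k - (4::real)^k *\<^sub>R T (Q k))"
        unfolding lh_pprt[OF lh] y_def Tlin(2) Tlin(3) ..
      finally have "norm (T (z (idx k))) \<le> norm (T (inf (z (idx k)) ((4::real)^k *\<^sub>R Q k))) + norm (pprt (y k - (4::real)^k *\<^sub>R T (Q k)))"
        by (simp add: norm_triangle_ineq)
      then show ?thesis using p by linarith
    qed
    define g where "g i = (1/2::real)^i *\<^sub>R y i" for i
    have g_sum: "summable g"
    proof (rule summable_comparison_test)
      show "\<exists>N. \<forall>n\<ge>N. norm (g n) \<le> (1/2)^n * (M * K)"
        using yK by (intro exI[of _ 0]) (simp add: g_def mult_left_mono)
      show "summable (\<lambda>n. (1/2::real)^n * (M * K))"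
        by (intro summable_mult2 summable_geometric) simp
    qed
    define Y where "Y = suminf g"
    have g0: "0 \<le> g i" for i unfolding g_def using y0 by (simp add: scaleR_nonneg_nonneg)
    have Y_ge: "g k \<le> Y" for k
    proof -
      have "(\<lambda>n. \<Sum>i<n. g i) \<longlonglongrightarrow> Y" unfolding Y_def by (rule summable_LIMSEQ[OF g_sum])
      moreover have "eventually (\<lambda>n. g k \<le> (\<Sum>i<n. g i)) sequentially"
        unfolding eventually_sequentially
        by (rule exI[of _ "Suc k"], intro allI impI term_le_sum) (auto simp: g0)
      ultimately show ?thesis by (rule le_limit)
    qed
    have Y0: "0 \<le> Y" using g0[of 0] Y_ge[of 0] by simp
    define d where "d k = pprt (y k - (4::real)^k *\<^sub>R T (Q k) - (1/2::real)^k *\<^sub>R Y)" for k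
    have d0: "0 \<le> d k" for k unfolding d_def by simp
    have d_big: "\<delta> / 2 - (1/2)^k * norm Y \<le> norm (d k)" for k
    proof -
      have b0: "0 \<le> (1/2::real)^k *\<^sub>R Y" using Y0 by (simp add: scaleR_nonneg_nonneg)
      have "pprt (y k - (4::real)^k *\<^sub>R T (Q k)) \<le> d k + (1/2::real)^k *\<^sub>R Y"
        unfolding d_def by (rule pprt_le_pprt_diff_plus[OF b0])
      then have "norm (pprt (y k - (4::real)^k *\<^sub>R T (Q k))) \<le> norm (d k + (1/2::real)^k *\<^sub>R Y)"
        by (rule norm_mono_pos[OF zero_le_pprt])
      also have "\<dots> \<le> norm (d k) + (1/2)^k * norm Y"
        using norm_triangle_ineq[of "d k" "(1/2::real)^k *\<^sub>R Y"] by simp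
      finally show ?thesis using e_big[of k] by linarith
    qed
    have d_le_y: "d k \<le> y k" for k
    proof -
      have "0 \<le> (4::real)^k *\<^sub>R T (Q k) + (1/2::real)^k *\<^sub>R Y"
        using TQ_nn Y0 by (simp add: scaleR_nonneg_nonneg)
      then have "y k - (4::real)^k *\<^sub>R T (Q k) - (1/2::real)^k *\<^sub>R Y \<le> y k" by (simp add: algebra_simps)
      then have "d k \<le> pprt (y k)" unfolding d_def by (rule pprt_mono)
      then show ?thesis using y0 by simp
    qed
    have disj: "inf (d k) (d m) = 0" if mk: "m < k" for m k
    proof -
      define c where "c = (4::real)^k"
      have c0: "0 < c" unfolding c_def by simp
      have "d k \<le> pprt (y k - c *\<^sub>R y m)"
      proof -
        have "c *\<^sub>R y m \<le> c *\<^sub>R T (Q k)" using TQ_ge[OF mk] c0 by (simp add: scaleR_left_mono)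
        moreover have "0 \<le> (1/2::real)^k *\<^sub>R Y" using Y0 by (simp add: scaleR_nonneg_nonneg)
        ultimately have "c *\<^sub>R y m \<le> c *\<^sub>R T (Q k) + (1/2::real)^k *\<^sub>R Y"
          by (simp add: add_increasing2)
        then have "y k - c *\<^sub>R T (Q k) - (1/2::real)^k *\<^sub>R Y \<le> y k - c *\<^sub>R y m"
          by (simp add: algebra_simps)
        then show ?thesis unfolding d_def c_def by (rule pprt_mono)
      qed
      moreover have "d m \<le> pprt (y m - inverse c *\<^sub>R y k)"
      proof -
        have ic1: "(1/2::real)^k * (1/2)^k = (1/4)^k"
          by (simp add: power_mult_distrib[symmetric])
        have ic2: "(1/4::real)^k = inverse (4^k)"
          by (simp add: power_one_over inverse_eq_divide)
        have ic: "inverse c = (1/2::real)^k * (1/2)^k" unfolding c_def ic1 ic2 ..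
        have "(1/2::real)^k \<le> (1/2)^m" using mk by (intro power_decreasing) simp_all
        then have "inverse c \<le> (1/2::real)^m * (1/2)^k" unfolding ic by (simp add: mult_right_mono)
        then have "inverse c *\<^sub>R y k \<le> ((1/2::real)^m * (1/2)^k) *\<^sub>R y k"
          using y0 by (rule scaleR_right_mono)
        also have "\<dots> = (1/2::real)^m *\<^sub>R g k" unfolding g_def by simp
        also have "\<dots> \<le> (1/2::real)^m *\<^sub>R Y" using Y_ge[of k] by (simp add: scaleR_left_mono)
        finally have "inverse c *\<^sub>R y k \<le> (1/2::real)^m *\<^sub>R Y" .
        moreover have "0 \<le> (4::real)^m *\<^sub>R T (Q m)" using TQ_nn by (simp add: scaleR_nonneg_nonneg)
        ultimately have "inverse c *\<^sub>R y k \<le> (4::real)^m *\<^sub>R T (Q m) + (1/2::real)^m *\<^sub>R Y"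
          by (simp add: add_increasing)
        then have "y m - (4::real)^m *\<^sub>R T (Q m) - (1/2::real)^m *\<^sub>R Y \<le> y m - inverse c *\<^sub>R y k"
          by (simp add: algebra_simps)
        then show ?thesis unfolding d_def by (rule pprt_mono)
      qed
      ultimately have "inf (d k) (d m) \<le> inf (pprt (y k - c *\<^sub>R y m)) (pprt (y m - inverse c *\<^sub>R y k))"
        by (rule inf_mono)
      also have "\<dots> = 0" by (rule disj_key[OF c0])
      finally show ?thesis using d0 by (simp add: order_antisym)
    qed
    define e where "e k = inverse M *\<^sub>R d k" for k
    have e0: "0 \<le> e k" for k unfolding e_def using M(1) d0 by (simp add: scaleR_nonneg_nonneg)
    have "disjoint_seq e"
      unfolding disjoint_seq_def
    proof (intro allI impI)
      fix m k :: nat assume "m \<noteq> k"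
      have "inf (d m) (d k) = 0"
        using disj[of m k] disj[of k m] \<open>m \<noteq> k\<close> by (cases "m < k") (simp_all add: inf_commute)
      then have "inf (e m) (e k) = 0" unfolding e_def using M(1) by (simp flip: scaleR_inf)
      then show "inf (labs (e m)) (labs (e k)) = 0" by (simp add: labs_of_nonneg e0)
    qed
    moreover have "range e \<subseteq> solid_hull (T ` cball 0 1)"
    proof
      fix v assume "v \<in> range e"
      then obtain k where v: "v = e k" by blast
      have zc: "inverse M *\<^sub>R z (idx k) \<in> cball 0 1"
        using zM[of "idx k"] M(1) by (simp add: field_simps)
      have "labs v \<le> labs (T (inverse M *\<^sub>R z (idx k)))"
      proof -
        have "labs v = inverse M *\<^sub>R d k" unfolding v by (simp only: labs_of_nonneg[OF e0]) (simp only: e_def)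
        also have "\<dots> \<le> inverse M *\<^sub>R y k" using d_le_y M(1) by (simp add: scaleR_left_mono)
        also have "\<dots> = T (inverse M *\<^sub>R z (idx k))" unfolding y_def Tlin(3) ..
        also have "\<dots> = labs (T (inverse M *\<^sub>R z (idx k)))"
          using lh_nonneg[OF lh, of "inverse M *\<^sub>R z (idx k)"] z0 M(1)
          by (simp add: labs_of_nonneg scaleR_nonneg_nonneg)
        finally show ?thesis .
      qed
      then show "v \<in> solid_hull (T ` cball 0 1)" unfolding solid_hull_def using zc by blast
    qed
    ultimately have "(\<lambda>k. norm (e k)) \<longlonglongrightarrow> 0" using lw unfolding L_weakly_compact_def by blast
    then have "(\<lambda>k. M * norm (e k)) \<longlonglongrightarrow> 0" by (simp add: tendsto_mult_right_zero)
    moreover have "M * norm (e k) = norm (d k)" for k unfolding e_def using M(1) by simp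
    ultimately have dlim: "(\<lambda>k. norm (d k)) \<longlonglongrightarrow> 0" by simp
    have "(\<lambda>k. \<delta> / 2 - (1/2::real)^k * norm Y) \<longlonglongrightarrow> \<delta> / 2 - 0 * norm Y"
      by (intro tendsto_intros) simp
    then have "\<delta> / 2 \<le> 0" using dlim d_big by (intro LIMSEQ_le) auto
    then show False using \<delta> by simp
  qed
qed

end
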